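(* Let $\mathbb{S}=\{1,2,\ldots,N\}$ with $N\in\mathbb{N}\cup\{\infty\}$, and for each $x\in\mathbb{R}^d$ let $Q(x)=(q_{ij}(x))_{i,j\in\mathbb{S}}$ be a transition rate matrix. Assume: (A2) for each $x\in\mathbb{R}^d$, $Q(x)$ is conservative and irreducible, and $\kappa:=\sup_{i\in\mathbb{S}}\sum_{j\in\mathbb{S},j\neq i}\sup_{x\in\mathbb{R}^d}q_{ij}(x)<\infty$; (A3) there is $K_3>0$ with $\|Q(x)-Q(y)\|_{\ell_1}:=\sup_{i\in\mathbb{S}}\sum_{j\neq i}|q_{ij}(x)-q_{ij}(y)|\le K_3|x-y|$ for all $x,y\in\mathbb{R}^d$; (A4) for each $x$ the semigroup $P^x_t$ has an invariant probability measure $\pi^x$, and there are constants $c_1,\lambda_1>0$ such that $\sup_{i\in\mathbb{S}}\|P_t^x(i,\cdot)-\pi^x\|_{\mathrm{var}}\le c_1e^{-\lambda_1 t}$ for all $t>0$ and $x\in\mathbb{R}^d$. Then for all $x,y\in\mathbb{R}^d$, $$\|\pi^x-\pi^y\|_{\mathrm{var}}\le C_\pi|x-y|,\qquad C_\pi=\frac{4c_1K_3}{\lambda_1}.$$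
   Context: $P_t^x$ denotes the transition semigroup of the continuous-time Markov chain on $\mathbb{S}$ with transition rate matrix $Q(x)$. Conservative means $q_{ij}(x)\ge0$ for $i\ne j$ and $\sum_j q_{ij}(x)=0$. For probability measures $\mu,\nu$ on $\mathbb{S}$, $\|\mu-\nu\|_{\mathrm{var}}=\sup\{|\mu(f)-\nu(f)|: |f|\le 1\}=\sum_{i}|\mu_i-\nu_i|$, where $\mu(f)=\sum_i\mu_if(i)$. *)

theory Defs
  imports "HOL-Analysis.Analysis" "HOL-Library.Extended_Nat"
begin

definition state_space :: "enat \<Rightarrow> nat set" where
  "state_space N = {i. 1 \<le> i \<and> enat i \<le> N}"

definition conservative :: "nat set \<Rightarrow> (nat \<Rightarrow> nat \<Rightarrow> real) \<Rightarrow> bool" where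
  "conservative S q \<longleftrightarrow>
     (\<forall>i\<in>S. \<forall>j\<in>S. i \<noteq> j \<longrightarrow> q i j \<ge> 0) \<and>
     (\<forall>i\<in>S. q i summable_on S \<and> (\<Sum>\<^sub>\<infinity>j\<in>S. q i j) = 0)"

definition irreducible_Q :: "nat set \<Rightarrow> (nat \<Rightarrow> nat \<Rightarrow> real) \<Rightarrow> bool" where
  "irreducible_Q S q \<longleftrightarrow>
     (\<forall>i\<in>S. \<forall>j\<in>S. i \<noteq> j \<longrightarrow>
        (i, j) \<in> {(a, b). a \<in> S \<and> b \<in> S \<and> a \<noteq> b \<and> q a b > 0}\<^sup>+)"

fun qpow :: "nat set \<Rightarrow> (nat \<Rightarrow> nat \<Rightarrow> real) \<Rightarrow> nat \<Rightarrow> nat \<Rightarrow> nat \<Rightarrow> real" where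
  "qpow S q 0 i j = (if i = j then 1 else 0)"
| "qpow S q (Suc n) i j = (\<Sum>\<^sub>\<infinity>k\<in>S. q i k * qpow S q n k j)"

text \<open>Transition semigroup P_t = exp(t Q) (rates are bounded, so the chain is
  non-explosive and its transition function is the exponential series).\<close>
definition trans_sg :: "nat set \<Rightarrow> (nat \<Rightarrow> nat \<Rightarrow> real) \<Rightarrow> real \<Rightarrow> nat \<Rightarrow> nat \<Rightarrow> real" where
  "trans_sg S q t i j = (\<Sum>n. t ^ n / fact n * qpow S q n i j)"

definition invariant_prob :: "nat set \<Rightarrow> (nat \<Rightarrow> nat \<Rightarrow> real) \<Rightarrow> (nat \<Rightarrow> real) \<Rightarrow> bool" where
  "invariant_prob S q p \<longleftrightarrow>
     (\<forall>i\<in>S. p i \<ge> 0) \<and> p summable_on S \<and> (\<Sum>\<^sub>\<infinity>i\<in>S. p i) = 1 \<and>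
     (\<forall>t\<ge>0. \<forall>j\<in>S. (\<Sum>\<^sub>\<infinity>i\<in>S. p i * trans_sg S q t i j) = p j)"

definition var_dist :: "nat set \<Rightarrow> (nat \<Rightarrow> real) \<Rightarrow> (nat \<Rightarrow> real) \<Rightarrow> real" where
  "var_dist S mu nu = (\<Sum>\<^sub>\<infinity>i\<in>S. \<bar>mu i - nu i\<bar>)"

end

theory Submission
  imports Defs
begin


lemma abs_summ_real: "(f::'a\<Rightarrow>real) summable_on A \<Longrightarrow> (\<lambda>x. \<bar>f x\<bar>) summable_on A"
  using summable_on_iff_abs_summable_on_real[of f A] by simp

lemma L0:
  fixes w h :: "'a \<Rightarrow> real"
  assumes w: "w summable_on A" and h: "\<And>x. x \<in> A \<Longrightarrow> \<bar>h x\<bar> \<le> H"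
  shows "(\<lambda>x. w x * h x) summable_on A"
    and "\<bar>\<Sum>\<^sub>\<infinity>x\<in>A. w x * h x\<bar> \<le> (\<Sum>\<^sub>\<infinity>x\<in>A. \<bar>w x\<bar>) * H"
proof -
  have aw: "(\<lambda>x. \<bar>w x\<bar> * H) summable_on A"
    using abs_summ_real[OF w] by (rule summable_on_cmult_left)
  have b: "norm (w x * h x) \<le> norm (\<bar>w x\<bar> * H)" if "x \<in> A" for x
  proof -
    have "\<bar>h x\<bar> \<le> H" using h that .
    hence "\<bar>w x\<bar> * \<bar>h x\<bar> \<le> \<bar>w x\<bar> * H" by (simp add: mult_left_mono)
    moreover have "H \<ge> 0" using \<open>\<bar>h x\<bar> \<le> H\<close> by linarith
    ultimately show ?thesis by (simp add: abs_mult)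
  qed
  have ab: "(\<lambda>x. norm (w x * h x)) summable_on A"
  proof -
    have aw': "(\<lambda>x. norm (\<bar>w x\<bar> * H)) summable_on A"
      using aw summable_on_iff_abs_summable_on_real[of "\<lambda>x. \<bar>w x\<bar> * H" A] by simp
    show ?thesis by (rule Infinite_Sum.abs_summable_on_comparison_test[OF aw' b])
  qed
  thus s: "(\<lambda>x. w x * h x) summable_on A" using summable_on_iff_abs_summable_on_real[of "\<lambda>x. w x * h x" A] by simp
  have "\<bar>\<Sum>\<^sub>\<infinity>x\<in>A. w x * h x\<bar> \<le> (\<Sum>\<^sub>\<infinity>x\<in>A. norm (w x * h x))"
    using norm_infsum_bound[OF ab] by simp
  also have "\<dots> \<le> (\<Sum>\<^sub>\<infinity>x\<in>A. \<bar>w x\<bar> * H)"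
  proof (rule infsum_mono)
    show "(\<lambda>x. norm (w x * h x)) summable_on A" using ab .
    show "(\<lambda>x. \<bar>w x\<bar> * H) summable_on A" using aw .
    fix x assume "x \<in> A" thus "norm (w x * h x) \<le> \<bar>w x\<bar> * H"
      using b[of x] h[of x] by (simp add: abs_mult mult_left_mono)
  qed
  also have "\<dots> = (\<Sum>\<^sub>\<infinity>x\<in>A. \<bar>w x\<bar>) * H" by (rule infsum_cmult_left')
  finally show "\<bar>\<Sum>\<^sub>\<infinity>x\<in>A. w x * h x\<bar> \<le> (\<Sum>\<^sub>\<infinity>x\<in>A. \<bar>w x\<bar>) * H" .
qed

lemma PS:
  fixes f :: "'a \<Rightarrow> 'b \<Rightarrow> real"
  assumes r: "\<And>x. x \<in> A \<Longrightarrow> f x summable_on B"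
    and rb: "\<And>x. x \<in> A \<Longrightarrow> (\<Sum>\<^sub>\<infinity>y\<in>B. \<bar>f x y\<bar>) \<le> b x"
    and bs: "b summable_on A"
  shows "(\<lambda>(x,y). f x y) summable_on A \<times> B"
proof -
  have "(\<lambda>p. norm ((\<lambda>(x,y). f x y) p)) summable_on Sigma A (\<lambda>_. B)"
  proof (subst Infinite_Sum.abs_summable_on_Sigma_iff, intro conjI ballI)
    fix x assume "x \<in> A"
    thus "(\<lambda>y. norm ((\<lambda>(x,y). f x y) (x, y))) summable_on B"
      using r[of x] summable_on_iff_abs_summable_on_real by auto
  next
    show "(\<lambda>x. norm (\<Sum>\<^sub>\<infinity>y\<in>B. norm ((\<lambda>(x,y). f x y) (x, y)))) summable_on A"
    proof (rule Infinite_Sum.abs_summable_on_comparison_test)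
      show "(\<lambda>x. norm (b x)) summable_on A" using bs summable_on_iff_abs_summable_on_real[of b A] by simp
      fix x assume x: "x \<in> A"
      have "0 \<le> (\<Sum>\<^sub>\<infinity>y\<in>B. \<bar>f x y\<bar>)" by (rule infsum_nonneg) simp
      thus "norm (\<Sum>\<^sub>\<infinity>y\<in>B. norm ((\<lambda>(x,y). f x y) (x, y))) \<le> norm (b x)"
        using rb[OF x] by simp
    qed
  qed
  thus ?thesis using summable_on_iff_abs_summable_on_real[of "\<lambda>(x,y). f x y" "A \<times> B"] by simp
qed


definition rowb :: "nat set \<Rightarrow> (nat \<Rightarrow> nat \<Rightarrow> real) \<Rightarrow> real \<Rightarrow> bool" where
  "rowb S q B \<longleftrightarrow> (\<forall>i\<in>S. q i summable_on S \<and> (\<Sum>\<^sub>\<infinity>k\<in>S. \<bar>q i k\<bar>) \<le> B)"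

lemma L1a:
  assumes q: "rowb S q B" and w: "w summable_on S"
  shows "(\<lambda>k. \<Sum>\<^sub>\<infinity>i\<in>S. w i * q i k) summable_on S"
    and "(\<Sum>\<^sub>\<infinity>k\<in>S. \<bar>\<Sum>\<^sub>\<infinity>i\<in>S. w i * q i k\<bar>) \<le> B * (\<Sum>\<^sub>\<infinity>i\<in>S. \<bar>w i\<bar>)"
proof -
  define g where "g i k = \<bar>w i * q i k\<bar>" for i k
  have P: "(\<lambda>(i,k). g i k) summable_on S \<times> S"
  proof (rule PS[where b="\<lambda>i. \<bar>w i\<bar> * B"])
    fix i assume i: "i \<in> S"
    from q i have qi: "q i summable_on S" "(\<Sum>\<^sub>\<infinity>k\<in>S. \<bar>q i k\<bar>) \<le> B" by (auto simp: rowb_def)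
    have aq: "(\<lambda>k. \<bar>q i k\<bar>) summable_on S" using abs_summ_real[OF qi(1)] .
    show "(\<lambda>k. g i k) summable_on S" using summable_on_cmult_right[OF aq, of "\<bar>w i\<bar>"]
      by (simp add: abs_mult g_def)
    have "(\<Sum>\<^sub>\<infinity>k\<in>S. \<bar>g i k\<bar>) = \<bar>w i\<bar> * (\<Sum>\<^sub>\<infinity>k\<in>S. \<bar>q i k\<bar>)"
      by (simp add: abs_mult infsum_cmult_right' g_def)
    also have "\<dots> \<le> \<bar>w i\<bar> * B" using qi(2) by (simp add: mult_left_mono)
    finally show "(\<Sum>\<^sub>\<infinity>k\<in>S. \<bar>g i k\<bar>) \<le> \<bar>w i\<bar> * B" .
  next
    show "(\<lambda>i. \<bar>w i\<bar> * B) summable_on S" using abs_summ_real[OF w] by (rule summable_on_cmult_left)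
  qed
  have P': "(\<lambda>(k,i). g i k) summable_on S \<times> S"
    using summable_on_swap[THEN iffD1, OF P] by (simp add: case_prod_unfold)
  have col: "(\<lambda>i. g i k) summable_on S" if "k \<in> S" for k
    using summable_on_SigmaD1[of "\<lambda>k i. g i k" S "\<lambda>_. S" k] P' that by simp
  have colsum: "(\<lambda>k. \<Sum>\<^sub>\<infinity>i\<in>S. g i k) summable_on S"
    using summable_on_SigmaD[of "\<lambda>(k,i). g i k" S "\<lambda>_. S"] P' col by simp
  have bnd: "\<bar>\<Sum>\<^sub>\<infinity>i\<in>S. w i * q i k\<bar> \<le> (\<Sum>\<^sub>\<infinity>i\<in>S. g i k)" if "k \<in> S" for k
    using norm_infsum_bound[of "\<lambda>i. w i * q i k" S] col[OF that] by (simp add: g_def)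
  have gnn: "0 \<le> (\<Sum>\<^sub>\<infinity>i\<in>S. g i k)" for k by (rule infsum_nonneg) (simp add: g_def)
  show "(\<lambda>k. \<Sum>\<^sub>\<infinity>i\<in>S. w i * q i k) summable_on S"
  proof -
    have "(\<lambda>k. norm (\<Sum>\<^sub>\<infinity>i\<in>S. w i * q i k)) summable_on S"
    proof (rule Infinite_Sum.abs_summable_on_comparison_test)
      show "(\<lambda>k. norm (\<Sum>\<^sub>\<infinity>i\<in>S. g i k)) summable_on S"
        using colsum gnn by simp
      fix k assume "k \<in> S" thus "norm (\<Sum>\<^sub>\<infinity>i\<in>S. w i * q i k) \<le> norm (\<Sum>\<^sub>\<infinity>i\<in>S. g i k)"
        using bnd gnn[of k] by simp
    qed
    thus ?thesis using summable_on_iff_abs_summable_on_real[of "\<lambda>k. \<Sum>\<^sub>\<infinity>i\<in>S. w i * q i k" S] by simp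
  qed
  then have s2: "(\<lambda>k. \<bar>\<Sum>\<^sub>\<infinity>i\<in>S. w i * q i k\<bar>) summable_on S" by (rule abs_summ_real)
  have "(\<Sum>\<^sub>\<infinity>k\<in>S. \<bar>\<Sum>\<^sub>\<infinity>i\<in>S. w i * q i k\<bar>) \<le> (\<Sum>\<^sub>\<infinity>k\<in>S. \<Sum>\<^sub>\<infinity>i\<in>S. g i k)"
    by (rule infsum_mono[OF s2 colsum bnd])
  also have "\<dots> = (\<Sum>\<^sub>\<infinity>i\<in>S. \<Sum>\<^sub>\<infinity>k\<in>S. g i k)"
    using infsum_swap_banach[of g S S] P by simp
  also have "\<dots> = (\<Sum>\<^sub>\<infinity>i\<in>S. \<bar>w i\<bar> * (\<Sum>\<^sub>\<infinity>k\<in>S. \<bar>q i k\<bar>))"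
    by (rule infsum_cong) (simp add: g_def abs_mult infsum_cmult_right')
  also have "\<dots> \<le> (\<Sum>\<^sub>\<infinity>i\<in>S. \<bar>w i\<bar> * B)"
  proof (rule infsum_mono)
    have "(\<lambda>(i,k). g i k) summable_on Sigma S (\<lambda>_. S)" using P by simp
    hence "(\<lambda>i. \<Sum>\<^sub>\<infinity>k\<in>S. g i k) summable_on S"
      using summable_on_SigmaD[of "\<lambda>(i,k). g i k" S "\<lambda>_. S"] summable_on_SigmaD1[of g S "\<lambda>_. S"]
      by simp
    thus "(\<lambda>i. \<bar>w i\<bar> * (\<Sum>\<^sub>\<infinity>k\<in>S. \<bar>q i k\<bar>)) summable_on S"
      by (simp add: g_def abs_mult infsum_cmult_right')
    show "(\<lambda>i. \<bar>w i\<bar> * B) summable_on S" using abs_summ_real[OF w] by (rule summable_on_cmult_left)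
    fix i assume "i \<in> S" thus "\<bar>w i\<bar> * (\<Sum>\<^sub>\<infinity>k\<in>S. \<bar>q i k\<bar>) \<le> \<bar>w i\<bar> * B"
      using q by (simp add: rowb_def mult_left_mono)
  qed
  also have "\<dots> = B * (\<Sum>\<^sub>\<infinity>i\<in>S. \<bar>w i\<bar>)" by (subst infsum_cmult_left') (rule mult.commute)
  finally show "(\<Sum>\<^sub>\<infinity>k\<in>S. \<bar>\<Sum>\<^sub>\<infinity>i\<in>S. w i * q i k\<bar>) \<le> B * (\<Sum>\<^sub>\<infinity>i\<in>S. \<bar>w i\<bar>)" .
qed

lemma L1b:
  assumes q: "rowb S q B" and w: "w summable_on S"
    and g: "\<And>k. k \<in> S \<Longrightarrow> \<bar>g k\<bar> \<le> G" and G: "G \<ge> 0"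
  shows "(\<Sum>\<^sub>\<infinity>i\<in>S. w i * (\<Sum>\<^sub>\<infinity>k\<in>S. q i k * g k)) = (\<Sum>\<^sub>\<infinity>k\<in>S. (\<Sum>\<^sub>\<infinity>i\<in>S. w i * q i k) * g k)"
proof -
  define f where "f i k = w i * q i k * g k" for i k
  have P: "(\<lambda>(i,k). f i k) summable_on S \<times> S"
  proof (rule PS[where b="\<lambda>i. \<bar>w i\<bar> * (B * G)"])
    fix i assume i: "i \<in> S"
    from q i have qi: "q i summable_on S" "(\<Sum>\<^sub>\<infinity>k\<in>S. \<bar>q i k\<bar>) \<le> B" by (auto simp: rowb_def)
    have s: "(\<lambda>k. q i k * g k) summable_on S" by (rule L0(1)[OF qi(1) g])
    show "(\<lambda>k. f i k) summable_on S" using summable_on_cmult_right[OF s, of "w i"]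
      by (simp add: f_def mult.assoc)
    have aq: "(\<lambda>k. \<bar>q i k\<bar>) summable_on S" using abs_summ_real[OF qi(1)] .
    have "(\<Sum>\<^sub>\<infinity>k\<in>S. \<bar>f i k\<bar>) = \<bar>w i\<bar> * (\<Sum>\<^sub>\<infinity>k\<in>S. \<bar>q i k\<bar> * \<bar>g k\<bar>)"
      by (simp add: abs_mult infsum_cmult_right' f_def mult.assoc)
    also have "(\<Sum>\<^sub>\<infinity>k\<in>S. \<bar>q i k\<bar> * \<bar>g k\<bar>) \<le> (\<Sum>\<^sub>\<infinity>k\<in>S. \<bar>q i k\<bar> * G)"
    proof (rule infsum_mono)
      show "(\<lambda>k. \<bar>q i k\<bar> * \<bar>g k\<bar>) summable_on S" using L0(1)[OF aq, of "\<lambda>k. \<bar>g k\<bar>" G] g by simp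
      show "(\<lambda>k. \<bar>q i k\<bar> * G) summable_on S" using aq by (rule summable_on_cmult_left)
    qed (simp add: g mult_left_mono)
    also have "(\<Sum>\<^sub>\<infinity>k\<in>S. \<bar>q i k\<bar> * G) \<le> B * G"
      using qi(2) G by (simp add: infsum_cmult_left' mult_right_mono)
    finally show "(\<Sum>\<^sub>\<infinity>k\<in>S. \<bar>f i k\<bar>) \<le> \<bar>w i\<bar> * (B * G)"
      by (simp add: mult_left_mono)
  next
    show "(\<lambda>i. \<bar>w i\<bar> * (B * G)) summable_on S" using abs_summ_real[OF w] by (rule summable_on_cmult_left)
  qed
  have "(\<Sum>\<^sub>\<infinity>i\<in>S. w i * (\<Sum>\<^sub>\<infinity>k\<in>S. q i k * g k)) = (\<Sum>\<^sub>\<infinity>i\<in>S. \<Sum>\<^sub>\<infinity>k\<in>S. f i k)"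
    by (rule infsum_cong) (simp add: f_def infsum_cmult_right'[symmetric] mult.assoc)
  also have "\<dots> = (\<Sum>\<^sub>\<infinity>k\<in>S. \<Sum>\<^sub>\<infinity>i\<in>S. f i k)"
    using infsum_swap_banach[of f S S] P by simp
  also have "\<dots> = (\<Sum>\<^sub>\<infinity>k\<in>S. (\<Sum>\<^sub>\<infinity>i\<in>S. w i * q i k) * g k)"
    by (rule infsum_cong) (simp add: f_def infsum_cmult_left')
  finally show ?thesis .
qed


lemma delta_infsum:
  assumes "i \<in> S"
  shows "(\<lambda>k. if i = k then f k else 0) summable_on S"
    and "(\<Sum>\<^sub>\<infinity>k\<in>S. if i = k then f k else (0::real)) = f i"
proof -
  have "(\<lambda>k. if i = k then f k else 0) summable_on S \<longleftrightarrow> (\<lambda>k. if i = k then f k else 0) summable_on {i}"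
    by (rule summable_on_cong_neutral) (use assms in auto)
  thus "(\<lambda>k. if i = k then f k else 0) summable_on S" by simp
  have "(\<Sum>\<^sub>\<infinity>k\<in>S. if i = k then f k else (0::real)) = (\<Sum>\<^sub>\<infinity>k\<in>{i}. if i = k then f k else (0::real))"
    by (rule infsum_cong_neutral) (use assms in auto)
  thus "(\<Sum>\<^sub>\<infinity>k\<in>S. if i = k then f k else (0::real)) = f i" by simp
qed

lemma qpow_row:
  assumes q: "rowb S q B" and B: "0 \<le> B"
  shows "rowb S (qpow S q n) (B ^ n)"
proof (induction n)
  case 0
  show ?case unfolding rowb_def
  proof
    fix i assume i: "i \<in> S"
    have e0: "qpow S q 0 i = (\<lambda>k. if i = k then 1 else 0)" by (simp add: fun_eq_iff)
    have "qpow S q 0 i summable_on S"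
      unfolding e0 using delta_infsum(1)[OF i, of "\<lambda>_. 1"] by simp
    moreover have "(\<Sum>\<^sub>\<infinity>k\<in>S. \<bar>qpow S q 0 i k\<bar>) = (\<Sum>\<^sub>\<infinity>k\<in>S. if i = k then 1 else (0::real))"
      by (rule infsum_cong) simp
    ultimately show "qpow S q 0 i summable_on S \<and> (\<Sum>\<^sub>\<infinity>k\<in>S. \<bar>qpow S q 0 i k\<bar>) \<le> B ^ 0"
      using delta_infsum(2)[OF i, of "\<lambda>_. 1"] by simp
  qed
next
  case (Suc n)
  show ?case unfolding rowb_def
  proof
    fix i assume i: "i \<in> S"
    have qi: "q i summable_on S" "(\<Sum>\<^sub>\<infinity>k\<in>S. \<bar>q i k\<bar>) \<le> B" using q i by (auto simp: rowb_def)
    have e: "qpow S q (Suc n) i = (\<lambda>j. \<Sum>\<^sub>\<infinity>k\<in>S. q i k * qpow S q n k j)" by (simp add: fun_eq_iff)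
    have 1: "qpow S q (Suc n) i summable_on S" unfolding e by (rule L1a(1)[OF Suc qi(1)])
    have "(\<Sum>\<^sub>\<infinity>j\<in>S. \<bar>qpow S q (Suc n) i j\<bar>) \<le> B ^ n * (\<Sum>\<^sub>\<infinity>k\<in>S. \<bar>q i k\<bar>)"
      unfolding e by (rule L1a(2)[OF Suc qi(1)])
    also have "\<dots> \<le> B ^ n * B" using qi(2) B by (simp add: mult_left_mono)
    finally show "qpow S q (Suc n) i summable_on S \<and> (\<Sum>\<^sub>\<infinity>j\<in>S. \<bar>qpow S q (Suc n) i j\<bar>) \<le> B ^ Suc n"
      using 1 by (simp add: mult.commute)
  qed
qed

lemma row_entry:
  assumes "rowb S M C" "i \<in> S" "j \<in> S"
  shows "\<bar>M i j\<bar> \<le> C"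
proof -
  have s: "M i summable_on S" "(\<Sum>\<^sub>\<infinity>k\<in>S. \<bar>M i k\<bar>) \<le> C" using assms by (auto simp: rowb_def)
  have "sum (\<lambda>k. \<bar>M i k\<bar>) {j} \<le> (\<Sum>\<^sub>\<infinity>k\<in>S. \<bar>M i k\<bar>)"
    by (rule finite_sum_le_infsum) (use abs_summ_real[OF s(1)] assms in auto)
  thus ?thesis using s(2) by simp
qed

lemma qpow_entry:
  assumes "rowb S q B" "0 \<le> B" "i \<in> S" "j \<in> S"
  shows "\<bar>qpow S q n i j\<bar> \<le> B ^ n"
  using row_entry[OF qpow_row[OF assms(1,2)] assms(3,4)] .

lemma sum_inf:
  fixes f :: "nat \<Rightarrow> real"
  assumes "summable (\<lambda>n. \<bar>f n\<bar>)"
  shows "f summable_on UNIV" "infsum f UNIV = suminf f"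
proof -
  have sf: "summable f" using assms summable_rabs_cancel by blast
  have "(f has_sum suminf f) UNIV"
    by (rule norm_summable_imp_has_sum) (use assms sf summable_sums in auto)
  thus "f summable_on UNIV" "infsum f UNIV = suminf f" by (auto simp: summable_on_def infsumI)
qed

lemma exp_summ: "summable (\<lambda>n. (y::real) ^ n / fact n)"
  using summable_exp[of y] by (simp add: divide_inverse mult.commute)

lemma exp_sums: "(\<lambda>n. (y::real) ^ n / fact n) sums exp y"
  using exp_converges[of y] by (simp add: divide_inverse mult.commute)

definition rowmul :: "nat set \<Rightarrow> (nat \<Rightarrow> real) \<Rightarrow> (nat \<Rightarrow> nat \<Rightarrow> real) \<Rightarrow> nat \<Rightarrow> real" where
  "rowmul S w M j = (\<Sum>\<^sub>\<infinity>i\<in>S. w i * M i j)"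

definition Fw :: "nat set \<Rightarrow> (nat \<Rightarrow> nat \<Rightarrow> real) \<Rightarrow> (nat \<Rightarrow> real) \<Rightarrow> real \<Rightarrow> nat \<Rightarrow> real" where
  "Fw S q w t j = (\<Sum>n. rowmul S w (qpow S q n) j / fact n * t ^ n)"

lemma coef_bound:
  assumes q: "rowb S q B" and B: "0 \<le> B" and w: "w summable_on S" and j: "j \<in> S"
  shows "\<bar>rowmul S w (qpow S q n) j\<bar> \<le> (\<Sum>\<^sub>\<infinity>i\<in>S. \<bar>w i\<bar>) * B ^ n"
  unfolding rowmul_def by (rule L0(2)[OF w]) (use qpow_entry[OF q B _ j] in auto)

lemma Fw_summable:
  assumes q: "rowb S q B" and B: "0 \<le> B" and w: "w summable_on S" and j: "j \<in> S"
  shows "summable (\<lambda>n. rowmul S w (qpow S q n) j / fact n * y ^ n)"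
proof (rule summable_comparison_test)
  let ?W = "\<Sum>\<^sub>\<infinity>i\<in>S. \<bar>w i\<bar>"
  show "summable (\<lambda>n. ?W * ((B * \<bar>y\<bar>) ^ n / fact n))"
    by (rule summable_mult) (rule exp_summ)
  show "\<exists>N. \<forall>n\<ge>N. norm (rowmul S w (qpow S q n) j / fact n * y ^ n) \<le> ?W * ((B * \<bar>y\<bar>) ^ n / fact n)"
  proof (intro exI allI impI)
    fix n :: nat
    have "norm (rowmul S w (qpow S q n) j / fact n * y ^ n) = \<bar>rowmul S w (qpow S q n) j\<bar> * \<bar>y\<bar> ^ n / fact n"
      by (simp add: abs_mult power_abs)
    also have "\<dots> \<le> (?W * B ^ n) * \<bar>y\<bar> ^ n / fact n"
      by (intro divide_right_mono mult_right_mono coef_bound[OF q B w j]) auto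
    also have "\<dots> = ?W * ((B * \<bar>y\<bar>) ^ n / fact n)" by (simp add: power_mult_distrib)
    finally show "norm (rowmul S w (qpow S q n) j / fact n * y ^ n) \<le> ?W * ((B * \<bar>y\<bar>) ^ n / fact n)" .
  qed
qed

lemma rowmul_Suc:
  assumes q: "rowb S q B" and B: "0 \<le> B" and w: "w summable_on S" and j: "j \<in> S"
  shows "rowmul S w (qpow S q (Suc n)) j = rowmul S (rowmul S w q) (qpow S q n) j"
  unfolding rowmul_def qpow.simps
  by (rule L1b[OF q w _ zero_le_power[OF B]]) (use qpow_entry[OF q B _ j] in auto)

lemma rowmul_q_summable:
  assumes q: "rowb S q B" and w: "w summable_on S"
  shows "rowmul S w q summable_on S"
  unfolding rowmul_def using L1a(1)[OF q w] .

lemma Fw_deriv: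
  assumes q: "rowb S q B" and B: "0 \<le> B" and w: "w summable_on S" and j: "j \<in> S"
  shows "((\<lambda>t. Fw S q w t j) has_field_derivative Fw S q (rowmul S w q) t j) (at t)"
proof -
  define c where "c n = rowmul S w (qpow S q n) j / fact n" for n
  have d: "((\<lambda>x. \<Sum>n. c n * x ^ n) has_field_derivative (\<Sum>n. diffs c n * t ^ n)) (at t)"
    by (rule termdiffs_strong_converges_everywhere) (unfold c_def, rule Fw_summable[OF q B w j])
  have "diffs c n = rowmul S (rowmul S w q) (qpow S q n) j / fact n" for n
  proof -
    have "diffs c n = of_nat (Suc n) * (rowmul S w (qpow S q (Suc n)) j / fact (Suc n))"
      by (simp add: diffs_def c_def)
    also have "\<dots> = rowmul S w (qpow S q (Suc n)) j / fact n"
      by (simp add: fact_Suc field_simps del: of_nat_Suc)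
    finally show ?thesis using rowmul_Suc[OF q B w j] by simp
  qed
  hence "diffs c = (\<lambda>n. rowmul S (rowmul S w q) (qpow S q n) j / fact n)" by auto
  thus ?thesis using d by (simp add: Fw_def c_def)
qed


lemma e_bound:
  assumes q: "rowb S q B" and B: "0 \<le> B" and i: "i \<in> S" and j: "j \<in> S"
  shows "\<bar>t ^ n / fact n * qpow S q n i j\<bar> \<le> (\<bar>t\<bar> * B) ^ n / fact n"
proof -
  have "\<bar>t ^ n / fact n * qpow S q n i j\<bar> = \<bar>t\<bar> ^ n / fact n * \<bar>qpow S q n i j\<bar>"
    by (simp add: abs_mult power_abs)
  also have "\<dots> \<le> \<bar>t\<bar> ^ n / fact n * B ^ n"
    by (rule mult_left_mono[OF qpow_entry[OF q B i j]]) simp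
  also have "\<dots> = (\<bar>t\<bar> * B) ^ n / fact n" by (simp add: power_mult_distrib)
  finally show ?thesis .
qed

lemma ts_series:
  assumes q: "rowb S q B" and B: "0 \<le> B" and i: "i \<in> S" and j: "j \<in> S"
  shows "summable (\<lambda>n. \<bar>t ^ n / fact n * qpow S q n i j\<bar>)"
    and "trans_sg S q t i j = (\<Sum>\<^sub>\<infinity>n\<in>UNIV. t ^ n / fact n * qpow S q n i j)"
    and "(\<lambda>n. t ^ n / fact n * qpow S q n i j) summable_on UNIV"
    and "\<bar>trans_sg S q t i j\<bar> \<le> exp (\<bar>t\<bar> * B)"
proof -
  show s: "summable (\<lambda>n. \<bar>t ^ n / fact n * qpow S q n i j\<bar>)"
    by (rule summable_comparison_test[OF _ exp_summ[of "\<bar>t\<bar> * B"]]) (use e_bound[OF q B i j] in auto)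
  show "trans_sg S q t i j = (\<Sum>\<^sub>\<infinity>n\<in>UNIV. t ^ n / fact n * qpow S q n i j)"
    using sum_inf(2)[OF s] by (simp add: trans_sg_def)
  show "(\<lambda>n. t ^ n / fact n * qpow S q n i j) summable_on UNIV" using sum_inf(1)[OF s] .
  have "\<bar>trans_sg S q t i j\<bar> \<le> (\<Sum>n. \<bar>t ^ n / fact n * qpow S q n i j\<bar>)"
    unfolding trans_sg_def using summable_norm[of "\<lambda>n. t ^ n / fact n * qpow S q n i j"] s by simp
  also have "\<dots> \<le> (\<Sum>n. (\<bar>t\<bar> * B) ^ n / fact n)"
    by (rule suminf_le[OF _ s exp_summ]) (use e_bound[OF q B i j] in auto)
  also have "\<dots> = exp (\<bar>t\<bar> * B)" using exp_sums sums_unique by metis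
  finally show "\<bar>trans_sg S q t i j\<bar> \<le> exp (\<bar>t\<bar> * B)" .
qed

lemma ts_row_summable:
  assumes q: "rowb S q B" and B: "0 \<le> B" and k: "k \<in> S"
  shows "(\<lambda>j. trans_sg S q t k j) summable_on S"
proof -
  define f where "f n j = t ^ n / fact n * qpow S q n k j" for n j
  have P: "(\<lambda>(n,j). f n j) summable_on UNIV \<times> S"
  proof (rule PS[where b="\<lambda>n. (\<bar>t\<bar> * B) ^ n / fact n"])
    fix n :: nat
    have r: "qpow S q n k summable_on S" "(\<Sum>\<^sub>\<infinity>j\<in>S. \<bar>qpow S q n k j\<bar>) \<le> B ^ n"
      using qpow_row[OF q B, of n] k by (auto simp: rowb_def)
    show "(\<lambda>j. f n j) summable_on S" unfolding f_def by (rule summable_on_cmult_right[OF r(1)])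
    have "(\<Sum>\<^sub>\<infinity>j\<in>S. \<bar>f n j\<bar>) = (\<Sum>\<^sub>\<infinity>j\<in>S. \<bar>t\<bar> ^ n / fact n * \<bar>qpow S q n k j\<bar>)"
      by (rule infsum_cong) (simp add: f_def abs_mult power_abs)
    also have "\<dots> = \<bar>t\<bar> ^ n / fact n * (\<Sum>\<^sub>\<infinity>j\<in>S. \<bar>qpow S q n k j\<bar>)"
      by (rule infsum_cmult_right')
    also have "\<dots> \<le> \<bar>t\<bar> ^ n / fact n * B ^ n" by (rule mult_left_mono[OF r(2)]) simp
    finally show "(\<Sum>\<^sub>\<infinity>j\<in>S. \<bar>f n j\<bar>) \<le> (\<bar>t\<bar> * B) ^ n / fact n" by (simp add: power_mult_distrib)
  next
    show "(\<lambda>n. (\<bar>t\<bar> * B) ^ n / fact n) summable_on UNIV"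
      using summable_on_UNIV_nonneg_real_iff[of "\<lambda>n. (\<bar>t\<bar> * B) ^ n / fact n"] exp_summ B by simp
  qed
  have P': "(\<lambda>(j,n). f n j) summable_on S \<times> UNIV"
    using summable_on_swap[THEN iffD1, OF P] by (simp add: case_prod_unfold)
  have col: "(\<lambda>n. f n j) summable_on UNIV" if "j \<in> S" for j
    using summable_on_SigmaD1[of "\<lambda>j n. f n j" S "\<lambda>_. UNIV" j] P' that by simp
  have "(\<lambda>j. \<Sum>\<^sub>\<infinity>n\<in>UNIV. f n j) summable_on S"
    using summable_on_SigmaD[of "\<lambda>(j,n). f n j" S "\<lambda>_. UNIV"] P' col by simp
  moreover have "trans_sg S q t k j = (\<Sum>\<^sub>\<infinity>n\<in>UNIV. f n j)" if "j \<in> S" for j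
    unfolding f_def by (rule ts_series(2)[OF q B k that])
  ultimately show ?thesis by (metis (no_types, lifting) summable_on_cong)
qed

lemma Fw_eq:
  assumes q: "rowb S q B" and B: "0 \<le> B" and w: "w summable_on S" and j: "j \<in> S"
  shows "Fw S q w t j = (\<Sum>\<^sub>\<infinity>i\<in>S. w i * trans_sg S q t i j)"
proof -
  define e where "e n i = t ^ n / fact n * qpow S q n i j" for n i
  define W where "W = (\<Sum>\<^sub>\<infinity>i\<in>S. \<bar>w i\<bar>)"
  have eb: "\<bar>e n i\<bar> \<le> (\<bar>t\<bar> * B) ^ n / fact n" if "i \<in> S" for n i
    unfolding e_def by (rule e_bound[OF q B that j])
  have P: "(\<lambda>(n,i). w i * e n i) summable_on UNIV \<times> S"
  proof (rule PS[where b="\<lambda>n. W * ((\<bar>t\<bar> * B) ^ n / fact n)"])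
    fix n :: nat
    show "(\<lambda>i. w i * e n i) summable_on S" by (rule L0(1)[OF w eb])
    have aw: "(\<lambda>i. \<bar>w i\<bar>) summable_on S" by (rule abs_summ_real[OF w])
    have "(\<Sum>\<^sub>\<infinity>i\<in>S. \<bar>w i * e n i\<bar>) = \<bar>\<Sum>\<^sub>\<infinity>i\<in>S. \<bar>w i\<bar> * \<bar>e n i\<bar>\<bar>"
    proof -
      have "0 \<le> (\<Sum>\<^sub>\<infinity>i\<in>S. \<bar>w i\<bar> * \<bar>e n i\<bar>)" by (rule infsum_nonneg) simp
      thus ?thesis by (simp add: abs_mult)
    qed
    also have "\<dots> \<le> (\<Sum>\<^sub>\<infinity>i\<in>S. \<bar>\<bar>w i\<bar>\<bar>) * ((\<bar>t\<bar> * B) ^ n / fact n)"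
      by (rule L0(2)[OF aw]) (use eb in auto)
    finally show "(\<Sum>\<^sub>\<infinity>i\<in>S. \<bar>w i * e n i\<bar>) \<le> W * ((\<bar>t\<bar> * B) ^ n / fact n)"
      by (simp add: W_def)
  next
    have "summable (\<lambda>n. W * ((\<bar>t\<bar> * B) ^ n / fact n))" by (rule summable_mult[OF exp_summ])
    moreover have "W \<ge> 0" unfolding W_def by (rule infsum_nonneg) simp
    ultimately show "(\<lambda>n. W * ((\<bar>t\<bar> * B) ^ n / fact n)) summable_on UNIV"
      using summable_on_UNIV_nonneg_real_iff[of "\<lambda>n. W * ((\<bar>t\<bar> * B) ^ n / fact n)"] B by simp
  qed
  have "(\<Sum>\<^sub>\<infinity>i\<in>S. w i * trans_sg S q t i j) = (\<Sum>\<^sub>\<infinity>i\<in>S. \<Sum>\<^sub>\<infinity>n\<in>UNIV. w i * e n i)"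
  proof (rule infsum_cong)
    fix i assume i: "i \<in> S"
    show "w i * trans_sg S q t i j = (\<Sum>\<^sub>\<infinity>n\<in>UNIV. w i * e n i)"
      unfolding ts_series(2)[OF q B i j] e_def by (rule infsum_cmult_right'[symmetric])
  qed
  also have "\<dots> = (\<Sum>\<^sub>\<infinity>n\<in>UNIV. \<Sum>\<^sub>\<infinity>i\<in>S. w i * e n i)"
    using infsum_swap_banach[of "\<lambda>n i. w i * e n i" UNIV S] P by simp
  also have "\<dots> = (\<Sum>\<^sub>\<infinity>n\<in>UNIV. rowmul S w (qpow S q n) j / fact n * t ^ n)"
  proof (rule infsum_cong)
    fix n :: nat
    have "(\<Sum>\<^sub>\<infinity>i\<in>S. w i * e n i) = (\<Sum>\<^sub>\<infinity>i\<in>S. (t ^ n / fact n) * (w i * qpow S q n i j))"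
      by (rule infsum_cong) (simp add: e_def)
    also have "\<dots> = (t ^ n / fact n) * (\<Sum>\<^sub>\<infinity>i\<in>S. w i * qpow S q n i j)"
      by (rule infsum_cmult_right')
    also have "\<dots> = rowmul S w (qpow S q n) j / fact n * t ^ n"
      by (simp add: rowmul_def)
    finally show "(\<Sum>\<^sub>\<infinity>i\<in>S. w i * e n i) = rowmul S w (qpow S q n) j / fact n * t ^ n" .
  qed
  also have "\<dots> = Fw S q w t j"
    unfolding Fw_def
  proof (rule sum_inf(2))
    show "summable (\<lambda>n. \<bar>rowmul S w (qpow S q n) j / fact n * t ^ n\<bar>)"
    proof (rule summable_comparison_test)
      show "summable (\<lambda>n. W * ((B * \<bar>t\<bar>) ^ n / fact n))"
        by (rule summable_mult) (rule exp_summ)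
      show "\<exists>N. \<forall>n\<ge>N. norm \<bar>rowmul S w (qpow S q n) j / fact n * t ^ n\<bar> \<le> W * ((B * \<bar>t\<bar>) ^ n / fact n)"
      proof (intro exI allI impI)
        fix n :: nat
        have "norm \<bar>rowmul S w (qpow S q n) j / fact n * t ^ n\<bar> = \<bar>rowmul S w (qpow S q n) j\<bar> * \<bar>t\<bar> ^ n / fact n"
          by (simp add: abs_mult power_abs)
        also have "\<dots> \<le> (W * B ^ n) * \<bar>t\<bar> ^ n / fact n"
          unfolding W_def by (intro divide_right_mono mult_right_mono coef_bound[OF q B w j]) auto
        also have "\<dots> = W * ((B * \<bar>t\<bar>) ^ n / fact n)" by (simp add: power_mult_distrib)
        finally show "norm \<bar>rowmul S w (qpow S q n) j / fact n * t ^ n\<bar> \<le> W * ((B * \<bar>t\<bar>) ^ n / fact n)" .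
      qed
    qed
  qed
  finally show ?thesis ..
qed


lemma summable_on_diff':
  fixes f g :: "'a \<Rightarrow> real"
  assumes "f summable_on A" "g summable_on A"
  shows "(\<lambda>x. f x - g x) summable_on A"
  using summable_on_add[OF assms(1) summable_on_uminus[THEN iffD2, OF assms(2)]] by simp

lemma infsum_diff':
  fixes f g :: "'a \<Rightarrow> real"
  assumes "f summable_on A" "g summable_on A"
  shows "(\<Sum>\<^sub>\<infinity>x\<in>A. f x - g x) = infsum f A - infsum g A"
  using infsum_add[OF assms(1) summable_on_uminus[THEN iffD2, OF assms(2)]] infsum_uminus[of g A] by simp

lemma infsum_split:
  fixes f :: "'a \<Rightarrow> real"
  assumes "f summable_on S" "i \<in> S"
  shows "infsum f S = f i + infsum f (S - {i})"
proof -
  have "S = {i} \<union> (S - {i})" using assms(2) by auto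
  hence "infsum f S = infsum f ({i} \<union> (S - {i}))" by simp
  also have "\<dots> = infsum f {i} + infsum f (S - {i})"
    by (rule infsum_Un_disjoint) (use summable_on_subset_banach[OF assms(1)] in auto)
  finally show ?thesis by simp
qed

lemma fin_swap:
  fixes w :: "'a \<Rightarrow> real" and M :: "'a \<Rightarrow> 'b \<Rightarrow> real"
  assumes F: "finite F" and w: "w summable_on S" and M: "\<And>j k. j \<in> F \<Longrightarrow> k \<in> S \<Longrightarrow> \<bar>M k j\<bar> \<le> C"
  shows "(\<Sum>j\<in>F. s j * (\<Sum>\<^sub>\<infinity>k\<in>S. w k * M k j)) = (\<Sum>\<^sub>\<infinity>k\<in>S. w k * (\<Sum>j\<in>F. s j * M k j))
       \<and> (\<lambda>k. w k * (\<Sum>j\<in>F. s j * M k j)) summable_on S"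
  using F M
proof (induction F rule: finite_induct)
  case empty
  then show ?case by simp
next
  case (insert a F)
  have IH: "(\<Sum>j\<in>F. s j * (\<Sum>\<^sub>\<infinity>k\<in>S. w k * M k j)) = (\<Sum>\<^sub>\<infinity>k\<in>S. w k * (\<Sum>j\<in>F. s j * M k j))"
     "(\<lambda>k. w k * (\<Sum>j\<in>F. s j * M k j)) summable_on S"
    using insert.IH insert.prems by auto
  have sa: "(\<lambda>k. w k * M k a) summable_on S" by (rule L0(1)[OF w]) (use insert.prems in auto)
  have sa': "(\<lambda>k. s a * (w k * M k a)) summable_on S" by (rule summable_on_cmult_right[OF sa])
  have e: "(\<lambda>k. w k * (\<Sum>j\<in>insert a F. s j * M k j)) = (\<lambda>k. s a * (w k * M k a) + w k * (\<Sum>j\<in>F. s j * M k j))"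
    using insert.hyps by (auto simp: fun_eq_iff algebra_simps)
  show ?case
  proof
    show "(\<lambda>k. w k * (\<Sum>j\<in>insert a F. s j * M k j)) summable_on S"
      unfolding e by (rule summable_on_add[OF sa' IH(2)])
    have "(\<Sum>\<^sub>\<infinity>k\<in>S. w k * (\<Sum>j\<in>insert a F. s j * M k j))
        = (\<Sum>\<^sub>\<infinity>k\<in>S. s a * (w k * M k a)) + (\<Sum>\<^sub>\<infinity>k\<in>S. w k * (\<Sum>j\<in>F. s j * M k j))"
      unfolding e by (rule infsum_add[OF sa' IH(2)])
    also have "\<dots> = s a * (\<Sum>\<^sub>\<infinity>k\<in>S. w k * M k a) + (\<Sum>j\<in>F. s j * (\<Sum>\<^sub>\<infinity>k\<in>S. w k * M k j))"
      using IH(1) by (simp add: infsum_cmult_right')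
    also have "\<dots> = (\<Sum>j\<in>insert a F. s j * (\<Sum>\<^sub>\<infinity>k\<in>S. w k * M k j))"
      using insert.hyps by simp
    finally show "(\<Sum>j\<in>insert a F. s j * (\<Sum>\<^sub>\<infinity>k\<in>S. w k * M k j)) = (\<Sum>\<^sub>\<infinity>k\<in>S. w k * (\<Sum>j\<in>insert a F. s j * M k j))" ..
  qed
qed

lemma Fw_zero:
  assumes j: "j \<in> S"
  shows "Fw S q w 0 j = w j"
proof -
  have "Fw S q w 0 j = rowmul S w (qpow S q 0) j" unfolding Fw_def using powser_zero[of "\<lambda>n. rowmul S w (qpow S q n) j / fact n"] by simp
  also have "\<dots> = (\<Sum>\<^sub>\<infinity>i\<in>S. if j = i then w i else 0)"
    unfolding rowmul_def by (rule infsum_cong) auto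
  also have "\<dots> = w j" by (rule delta_infsum(2)[OF j])
  finally show ?thesis .
qed

lemma deriv_const_right:
  fixes G :: "real \<Rightarrow> real"
  assumes d: "(G has_field_derivative D) (at 0)" and c: "\<And>t. t > 0 \<Longrightarrow> G t = G 0"
  shows "D = 0"
proof -
  have "((\<lambda>h. (G (0 + h) - G 0) / h) \<longlongrightarrow> D) (at 0)" using d by (simp add: DERIV_def)
  hence "((\<lambda>h. (G (0 + h) - G 0) / h) \<longlongrightarrow> D) (at_right 0)" by (simp add: filterlim_at_split)
  moreover have ev: "\<forall>\<^sub>F h in at_right 0. (G (0 + h) - G 0) / h = (0::real)"
  proof -
    have "\<forall>\<^sub>F h in at_right 0. (0::real) < h" by (rule eventually_at_right_less)
    thus ?thesis by (rule eventually_mono) (simp add: c)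
  qed
  ultimately have "((\<lambda>h. 0) \<longlongrightarrow> D) (at_right (0::real))"
    using tendsto_cong[OF ev] by simp
  thus "D = 0" using tendsto_const_iff[of "at_right (0::real)" "0::real" D] by simp
qed

theorem proposition2p1:
  fixes N :: enat
    and Q :: "real ^ 'd \<Rightarrow> nat \<Rightarrow> nat \<Rightarrow> real"
    and pinv :: "real ^ 'd \<Rightarrow> nat \<Rightarrow> real"
    and K3 c1 lam1 :: real
  defines "S \<equiv> state_space N"
  assumes A2_cons: "\<forall>x. conservative S (Q x)"
    and A2_irr: "\<forall>x. irreducible_Q S (Q x)"
    and A2_bdd: "\<forall>i\<in>S. \<forall>j\<in>S. bdd_above (range (\<lambda>x. Q x i j))"
    and A2_kappa: "\<exists>\<kappa>. \<forall>i\<in>S. (\<lambda>j. SUP x. Q x i j) summable_on (S - {i}) \<and>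
                        (\<Sum>\<^sub>\<infinity>j\<in>S - {i}. SUP x. Q x i j) \<le> \<kappa>"
    and A3_pos: "K3 > 0"
    and A3: "\<forall>x y. \<forall>i\<in>S. (\<Sum>\<^sub>\<infinity>j\<in>S - {i}. \<bar>Q x i j - Q y i j\<bar>) \<le> K3 * norm (x - y)"
    and A4_inv: "\<forall>x. invariant_prob S (Q x) (pinv x)"
    and A4_pos: "c1 > 0" "lam1 > 0"
    and A4_conv: "\<forall>t>0. \<forall>x. \<forall>i\<in>S.
                    var_dist S (trans_sg S (Q x) t i) (pinv x) \<le> c1 * exp (- lam1 * t)"
  shows "\<forall>x y. var_dist S (pinv x) (pinv y) \<le> 4 * c1 * K3 / lam1 * norm (x - y)"
proof (intro allI)
  fix x y :: "real ^ 'd"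
  from A2_kappa obtain \<kappa> where kap: "\<forall>i\<in>S. (\<lambda>j. SUP x. Q x i j) summable_on (S - {i}) \<and>
                        (\<Sum>\<^sub>\<infinity>j\<in>S - {i}. SUP x. Q x i j) \<le> \<kappa>" by blast
  define B where "B = 2 * \<bar>\<kappa>\<bar>"
  have B0: "0 \<le> B" by (simp add: B_def)
  have cons: "Q z i summable_on S" "(\<Sum>\<^sub>\<infinity>k\<in>S. Q z i k) = 0" if "i \<in> S" for z i
    using A2_cons that by (auto simp: conservative_def)
  have offnn: "Q z i k \<ge> 0" if "i \<in> S" "k \<in> S" "i \<noteq> k" for z i k
    using A2_cons that by (auto simp: conservative_def)
  have offsumm: "Q z i summable_on (S - {i})" if "i \<in> S" for z i
    using summable_on_subset_banach[OF cons(1)[OF that]] by blast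
  have diag: "Q z i i = - (\<Sum>\<^sub>\<infinity>k\<in>S - {i}. Q z i k)" if "i \<in> S" for z i
    using infsum_split[OF cons(1)[OF that, of z] that] cons(2)[OF that, of z] by linarith
  have rowQ: "rowb S (Q z) B" for z
    unfolding rowb_def
  proof
    fix i assume i: "i \<in> S"
    have aq: "(\<lambda>k. \<bar>Q z i k\<bar>) summable_on S" by (rule abs_summ_real[OF cons(1)[OF i]])
    have "(\<Sum>\<^sub>\<infinity>k\<in>S. \<bar>Q z i k\<bar>) = \<bar>Q z i i\<bar> + (\<Sum>\<^sub>\<infinity>k\<in>S - {i}. \<bar>Q z i k\<bar>)"
      using infsum_split[OF aq i] by simp
    also have "(\<Sum>\<^sub>\<infinity>k\<in>S - {i}. \<bar>Q z i k\<bar>) = (\<Sum>\<^sub>\<infinity>k\<in>S - {i}. Q z i k)"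
      by (rule infsum_cong) (use offnn[OF i] in auto)
    also have "\<bar>Q z i i\<bar> = (\<Sum>\<^sub>\<infinity>k\<in>S - {i}. Q z i k)"
    proof -
      have "0 \<le> (\<Sum>\<^sub>\<infinity>k\<in>S - {i}. Q z i k)" by (rule infsum_nonneg) (use offnn[OF i] in auto)
      thus ?thesis using diag[OF i] by simp
    qed
    also have "(\<Sum>\<^sub>\<infinity>k\<in>S - {i}. Q z i k) \<le> (\<Sum>\<^sub>\<infinity>k\<in>S - {i}. SUP x. Q x i k)"
    proof (rule infsum_mono)
      show "Q z i summable_on S - {i}" by (rule offsumm[OF i])
      show "(\<lambda>k. SUP x. Q x i k) summable_on S - {i}" using kap i by blast
      fix k assume "k \<in> S - {i}"
      thus "Q z i k \<le> (SUP x. Q x i k)"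
        using A2_bdd i by (intro cSUP_upper) auto
    qed
    also have "\<dots> \<le> \<kappa>" using kap i by blast
    finally show "Q z i summable_on S \<and> (\<Sum>\<^sub>\<infinity>k\<in>S. \<bar>Q z i k\<bar>) \<le> B"
      using cons(1)[OF i] by (simp add: B_def)
  qed
  have inv: "\<forall>i\<in>S. pinv z i \<ge> 0" "pinv z summable_on S" "(\<Sum>\<^sub>\<infinity>i\<in>S. pinv z i) = 1"
     "\<forall>t\<ge>0. \<forall>j\<in>S. (\<Sum>\<^sub>\<infinity>i\<in>S. pinv z i * trans_sg S (Q z) t i j) = pinv z j" for z
    using A4_inv by (auto simp: invariant_prob_def)
  have pabs: "(\<Sum>\<^sub>\<infinity>i\<in>S. \<bar>pinv z i\<bar>) = 1" for z
    using inv(1,3)[of z] by (metis (no_types, lifting) abs_of_nonneg infsum_cong)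
  have piQ: "rowmul S (pinv x) (Q x) j = 0" if j: "j \<in> S" for j
  proof -
    have d: "((\<lambda>t. Fw S (Q x) (pinv x) t j) has_field_derivative Fw S (Q x) (rowmul S (pinv x) (Q x)) 0 j) (at 0)"
      by (rule Fw_deriv[OF rowQ B0 inv(2) j])
    have c: "Fw S (Q x) (pinv x) t j = Fw S (Q x) (pinv x) 0 j" if "t > 0" for t :: real
    proof -
      have "Fw S (Q x) (pinv x) t j = pinv x j"
        using Fw_eq[OF rowQ[of x] B0 inv(2)[of x] j, of t] inv(4)[of x] j that by simp
      moreover have "Fw S (Q x) (pinv x) 0 j = pinv x j"
        using Fw_eq[OF rowQ[of x] B0 inv(2)[of x] j, of 0] inv(4)[of x] j by simp
      ultimately show ?thesis by simp
    qed
    have "Fw S (Q x) (rowmul S (pinv x) (Q x)) 0 j = 0" by (rule deriv_const_right[OF d c])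
    thus ?thesis using Fw_zero[OF j] by simp
  qed
  define D where "D = (\<lambda>i k. Q y i k - Q x i k)"
  define L where "L = 2 * K3 * norm (x - y)"
  have Dsumm: "D i summable_on S" if "i \<in> S" for i
    unfolding D_def by (rule summable_on_diff'[OF cons(1)[OF that] cons(1)[OF that]])
  have Dsum0: "(\<Sum>\<^sub>\<infinity>k\<in>S. D i k) = 0" if "i \<in> S" for i
    unfolding D_def using infsum_diff'[OF cons(1)[OF that] cons(1)[OF that]] cons(2)[OF that] by simp
  have rowD: "rowb S D L"
    unfolding rowb_def
  proof
    fix i assume i: "i \<in> S"
    have aD: "(\<lambda>k. \<bar>D i k\<bar>) summable_on S" by (rule abs_summ_real[OF Dsumm[OF i]])
    have aD': "(\<lambda>k. \<bar>D i k\<bar>) summable_on S - {i}" by (rule summable_on_subset_banach[OF aD]) auto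
    have off: "(\<Sum>\<^sub>\<infinity>k\<in>S - {i}. \<bar>D i k\<bar>) \<le> K3 * norm (x - y)"
      using A3 i unfolding D_def by (simp add: abs_minus_commute)
    have "D i i = - (\<Sum>\<^sub>\<infinity>k\<in>S - {i}. D i k)"
      using infsum_split[OF Dsumm[OF i] i] Dsum0[OF i] by simp
    hence "\<bar>D i i\<bar> \<le> (\<Sum>\<^sub>\<infinity>k\<in>S - {i}. \<bar>D i k\<bar>)"
      using norm_infsum_bound[of "D i" "S - {i}"] aD' by simp
    moreover have "(\<Sum>\<^sub>\<infinity>k\<in>S. \<bar>D i k\<bar>) = \<bar>D i i\<bar> + (\<Sum>\<^sub>\<infinity>k\<in>S - {i}. \<bar>D i k\<bar>)"
      using infsum_split[OF aD i] by simp
    ultimately show "D i summable_on S \<and> (\<Sum>\<^sub>\<infinity>k\<in>S. \<bar>D i k\<bar>) \<le> L"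
      using off Dsumm[OF i] by (simp add: L_def)
  qed
  define \<nu> where "\<nu> = rowmul S (pinv x) (Q y)"
  have \<nu>summ: "\<nu> summable_on S" unfolding \<nu>_def by (rule rowmul_q_summable[OF rowQ inv(2)])
  have colsumm: "(\<lambda>i. pinv w i * Q z i k) summable_on S" if "k \<in> S" for w z k
    by (rule L0(1)[OF inv(2)]) (use row_entry[OF rowQ _ that] in auto)
  have \<nu>D: "\<nu> k = (\<Sum>\<^sub>\<infinity>i\<in>S. pinv x i * D i k)" if k: "k \<in> S" for k
  proof -
    have "\<nu> k = (\<Sum>\<^sub>\<infinity>i\<in>S. pinv x i * Q y i k) - (\<Sum>\<^sub>\<infinity>i\<in>S. pinv x i * Q x i k)"
      using piQ[OF k] by (simp add: \<nu>_def rowmul_def)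
    also have "\<dots> = (\<Sum>\<^sub>\<infinity>i\<in>S. pinv x i * Q y i k - pinv x i * Q x i k)"
      by (rule infsum_diff'[symmetric]) (use colsumm[OF k] in auto)
    also have "\<dots> = (\<Sum>\<^sub>\<infinity>i\<in>S. pinv x i * D i k)"
      by (rule infsum_cong) (simp add: D_def algebra_simps)
    finally show ?thesis .
  qed
  define H where "H t = c1 * exp (- lam1 * t)" for t :: real
  have Hnn: "0 \<le> H t" for t using A4_pos unfolding H_def by (simp add: zero_le_mult_iff)
  have hbound: "\<bar>\<Sum>j\<in>F. s j * (trans_sg S (Q y) t k j - pinv y j)\<bar> \<le> H t"
    if "t > 0" "finite F" "F \<subseteq> S" "\<forall>j. \<bar>s j\<bar> \<le> 1" "k \<in> S" for t F s k
  proof -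
    have "\<bar>\<Sum>j\<in>F. s j * (trans_sg S (Q y) t k j - pinv y j)\<bar> \<le> (\<Sum>j\<in>F. \<bar>s j * (trans_sg S (Q y) t k j - pinv y j)\<bar>)"
      by (rule sum_abs)
    also have "\<dots> \<le> (\<Sum>j\<in>F. \<bar>trans_sg S (Q y) t k j - pinv y j\<bar>)"
    proof (rule sum_mono)
      fix j
      have "\<bar>s j\<bar> * \<bar>trans_sg S (Q y) t k j - pinv y j\<bar> \<le> 1 * \<bar>trans_sg S (Q y) t k j - pinv y j\<bar>"
        using that(4) by (intro mult_right_mono) auto
      thus "\<bar>s j * (trans_sg S (Q y) t k j - pinv y j)\<bar> \<le> \<bar>trans_sg S (Q y) t k j - pinv y j\<bar>"
        by (simp add: abs_mult)
    qed
    also have "\<dots> \<le> var_dist S (trans_sg S (Q y) t k) (pinv y)"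
      unfolding var_dist_def
    proof (rule finite_sum_le_infsum)
      show "(\<lambda>j. \<bar>trans_sg S (Q y) t k j - pinv y j\<bar>) summable_on S"
        by (rule abs_summ_real[OF summable_on_diff'[OF ts_row_summable[OF rowQ B0 that(5)] inv(2)]])
    qed (use that in auto)
    also have "\<dots> \<le> H t" using A4_conv that(1,5) by (simp add: H_def)
    finally show ?thesis .
  qed
  have Pbound: "\<bar>trans_sg S (Q y) t k j\<bar> \<le> exp (\<bar>t\<bar> * B)" if "k \<in> S" "j \<in> S" for t k j
    by (rule ts_series(4)[OF rowQ B0 that])
  have key: "\<bar>\<Sum>j\<in>F. s j * Fw S (Q y) \<nu> t j\<bar> \<le> L * H t"
    if t: "t > 0" and F: "finite F" "F \<subseteq> S" and s: "\<forall>j. \<bar>s j\<bar> \<le> 1" for t F s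
  proof -
    define P where "P = trans_sg S (Q y) t"
    define p where "p k = (\<Sum>j\<in>F. s j * P k j)" for k
    define c where "c = (\<Sum>j\<in>F. s j * pinv y j)"
    define E where "E = exp (\<bar>t\<bar> * B)"
    have pb: "\<bar>p k\<bar> \<le> real (card F) * E" if "k \<in> S" for k
    proof -
      have "\<bar>p k\<bar> \<le> (\<Sum>j\<in>F. \<bar>s j * P k j\<bar>)" unfolding p_def by (rule sum_abs)
      also have "\<dots> \<le> (\<Sum>j\<in>F. E)"
      proof (rule sum_mono)
        fix j assume "j \<in> F"
        hence "\<bar>P k j\<bar> \<le> E" using Pbound[OF that, of j] F by (auto simp: P_def E_def)
        moreover have "\<bar>s j\<bar> \<le> 1" using s by blast
        ultimately have "\<bar>s j\<bar> * \<bar>P k j\<bar> \<le> 1 * E"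
          by (intro mult_mono) auto
        thus "\<bar>s j * P k j\<bar> \<le> E" by (simp add: abs_mult)
      qed
      finally show ?thesis by simp
    qed
    have G0: "0 \<le> real (card F) * E" unfolding E_def by simp
    have "(\<Sum>j\<in>F. s j * Fw S (Q y) \<nu> t j) = (\<Sum>j\<in>F. s j * (\<Sum>\<^sub>\<infinity>k\<in>S. \<nu> k * P k j))"
      by (rule sum.cong) (use F Fw_eq[OF rowQ B0 \<nu>summ] in \<open>auto simp: P_def\<close>)
    also have "\<dots> = (\<Sum>\<^sub>\<infinity>k\<in>S. \<nu> k * p k)"
      unfolding p_def
      by (rule conjunct1[OF fin_swap[OF F(1) \<nu>summ]]) (use Pbound F in \<open>auto simp: P_def\<close>)
    also have "\<dots> = (\<Sum>\<^sub>\<infinity>k\<in>S. (\<Sum>\<^sub>\<infinity>i\<in>S. pinv x i * D i k) * p k)"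
      by (rule infsum_cong) (simp add: \<nu>D)
    also have "\<dots> = (\<Sum>\<^sub>\<infinity>i\<in>S. pinv x i * (\<Sum>\<^sub>\<infinity>k\<in>S. D i k * p k))"
      using L1b[OF rowD inv(2) pb G0] by simp
    finally have eq: "(\<Sum>j\<in>F. s j * Fw S (Q y) \<nu> t j) = (\<Sum>\<^sub>\<infinity>i\<in>S. pinv x i * (\<Sum>\<^sub>\<infinity>k\<in>S. D i k * p k))" .
    have inner: "\<bar>\<Sum>\<^sub>\<infinity>k\<in>S. D i k * p k\<bar> \<le> L * H t" if i: "i \<in> S" for i
    proof -
      have s1: "(\<lambda>k. D i k * p k) summable_on S" by (rule L0(1)[OF Dsumm[OF i] pb])
      have s2: "(\<lambda>k. D i k * c) summable_on S" by (rule summable_on_cmult_left[OF Dsumm[OF i]])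
      have "(\<Sum>\<^sub>\<infinity>k\<in>S. D i k * p k) = (\<Sum>\<^sub>\<infinity>k\<in>S. D i k * p k) - (\<Sum>\<^sub>\<infinity>k\<in>S. D i k) * c"
        using Dsum0[OF i] by simp
      also have "\<dots> = (\<Sum>\<^sub>\<infinity>k\<in>S. D i k * p k - D i k * c)"
        using infsum_diff'[OF s1 s2] infsum_cmult_left'[of "D i" c S] by simp
      also have "\<dots> = (\<Sum>\<^sub>\<infinity>k\<in>S. D i k * (\<Sum>j\<in>F. s j * (P k j - pinv y j)))"
        by (rule infsum_cong) (simp add: p_def c_def algebra_simps sum_subtractf)
      finally have e2: "(\<Sum>\<^sub>\<infinity>k\<in>S. D i k * p k) = (\<Sum>\<^sub>\<infinity>k\<in>S. D i k * (\<Sum>j\<in>F. s j * (P k j - pinv y j)))" .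
      have "\<bar>\<Sum>\<^sub>\<infinity>k\<in>S. D i k * (\<Sum>j\<in>F. s j * (P k j - pinv y j))\<bar> \<le> (\<Sum>\<^sub>\<infinity>k\<in>S. \<bar>D i k\<bar>) * H t"
        by (rule L0(2)[OF Dsumm[OF i]]) (use hbound[OF t F s] in \<open>auto simp: P_def\<close>)
      also have "\<dots> \<le> L * H t"
        using rowD i Hnn[of t] by (intro mult_right_mono) (auto simp: rowb_def)
      finally show ?thesis using e2 by simp
    qed
    have "\<bar>\<Sum>\<^sub>\<infinity>i\<in>S. pinv x i * (\<Sum>\<^sub>\<infinity>k\<in>S. D i k * p k)\<bar> \<le> (\<Sum>\<^sub>\<infinity>i\<in>S. \<bar>pinv x i\<bar>) * (L * H t)"
      by (rule L0(2)[OF inv(2) inner])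
    thus ?thesis using eq pabs[of x] by simp
  qed
  define C where "C = L * c1"
  have C0: "C \<ge> 0" using A3_pos A4_pos by (simp add: C_def L_def)
  have finite_bound: "(\<Sum>j\<in>F. \<bar>pinv x j - pinv y j\<bar>) \<le> C / lam1"
    if F: "finite F" "F \<subseteq> S" for F
  proof (rule field_le_epsilon)
    define s where "s j = sgn (pinv x j - pinv y j)" for j
    have s1: "\<forall>j. \<bar>s j\<bar> \<le> 1" by (simp add: s_def sgn_real_def)
    define g where "g t = (\<Sum>j\<in>F. s j * Fw S (Q y) (pinv x) t j)" for t
    define g' where "g' t = (\<Sum>j\<in>F. s j * Fw S (Q y) \<nu> t j)" for t
    have gd: "(g has_field_derivative g' t) (at t)" for t
      unfolding g_def g'_def
    proof (rule DERIV_sum)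
      fix j assume "j \<in> F"
      hence j: "j \<in> S" using F by auto
      show "((\<lambda>t. s j * Fw S (Q y) (pinv x) t j) has_field_derivative s j * Fw S (Q y) \<nu> t j) (at t)"
        unfolding \<nu>_def by (rule DERIV_cmult[OF Fw_deriv[OF rowQ B0 inv(2) j]])
    qed
    define h where "h t = g t - C / lam1 * exp (- lam1 * t)" for t
    have hd: "(h has_field_derivative (g' t + C * exp (- lam1 * t))) (at t)" for t
    proof -
      have e: "((\<lambda>t. exp (- lam1 * t)) has_field_derivative exp (- lam1 * t) * (- lam1)) (at t)"
        by (rule DERIV_fun_exp) (rule DERIV_cmult_Id)
      have "(h has_field_derivative (g' t - C / lam1 * (exp (- lam1 * t) * (- lam1)))) (at t)"
        unfolding h_def[abs_def] by (rule DERIV_diff[OF gd DERIV_cmult[OF e]])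
      thus ?thesis using A4_pos by simp
    qed
    have hmono: "h 0 \<le> h T" if T: "T > 0" for T
    proof -
      obtain z where z: "0 < z" "z < T" "h T - h 0 = (T - 0) * (g' z + C * exp (- lam1 * z))"
        using MVT2[OF T, of h "\<lambda>t. g' t + C * exp (- lam1 * t)"] hd by blast
      have "\<bar>g' z\<bar> \<le> L * H z" unfolding g'_def by (rule key[OF z(1) F s1])
      hence "0 \<le> g' z + C * exp (- lam1 * z)" by (simp add: H_def C_def mult.assoc)
      hence "0 \<le> (T - 0) * (g' z + C * exp (- lam1 * z))" using T by simp
      thus ?thesis using z(3) by simp
    qed
    have g0: "g 0 = (\<Sum>j\<in>F. s j * pinv x j)"
      unfolding g_def by (rule sum.cong) (use F Fw_zero in auto)
    have gT: "\<bar>g T - (\<Sum>j\<in>F. s j * pinv y j)\<bar> \<le> H T" if T: "T > 0" for T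
    proof -
      define P where "P = trans_sg S (Q y) T"
      define p where "p k = (\<Sum>j\<in>F. s j * P k j)" for k
      define c where "c = (\<Sum>j\<in>F. s j * pinv y j)"
      have fs: "(\<Sum>j\<in>F. s j * (\<Sum>\<^sub>\<infinity>k\<in>S. pinv x k * P k j)) = (\<Sum>\<^sub>\<infinity>k\<in>S. pinv x k * p k)
          \<and> (\<lambda>k. pinv x k * p k) summable_on S"
        unfolding p_def by (rule fin_swap[OF F(1) inv(2)]) (use Pbound F in \<open>auto simp: P_def\<close>)
      have "g T = (\<Sum>j\<in>F. s j * (\<Sum>\<^sub>\<infinity>k\<in>S. pinv x k * P k j))"
        unfolding g_def by (rule sum.cong) (use F Fw_eq[OF rowQ B0 inv(2)] in \<open>auto simp: P_def\<close>)
      also have "\<dots> = (\<Sum>\<^sub>\<infinity>k\<in>S. pinv x k * p k)" using fs by blast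
      finally have gTe: "g T = (\<Sum>\<^sub>\<infinity>k\<in>S. pinv x k * p k)" .
      have ce: "c = (\<Sum>\<^sub>\<infinity>k\<in>S. pinv x k * c)"
        using infsum_cmult_left'[of "pinv x" c S] inv(3)[of x] by simp
      have "g T - c = (\<Sum>\<^sub>\<infinity>k\<in>S. pinv x k * p k - pinv x k * c)"
        unfolding gTe by (subst ce, rule infsum_diff'[symmetric])
          (use fs summable_on_cmult_left[OF inv(2)[of x], of c] in auto)
      also have "\<dots> = (\<Sum>\<^sub>\<infinity>k\<in>S. pinv x k * (\<Sum>j\<in>F. s j * (P k j - pinv y j)))"
        by (rule infsum_cong) (simp add: p_def c_def algebra_simps sum_subtractf)
      finally have e3: "g T - c = (\<Sum>\<^sub>\<infinity>k\<in>S. pinv x k * (\<Sum>j\<in>F. s j * (P k j - pinv y j)))" .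
      have "\<bar>\<Sum>\<^sub>\<infinity>k\<in>S. pinv x k * (\<Sum>j\<in>F. s j * (P k j - pinv y j))\<bar> \<le> (\<Sum>\<^sub>\<infinity>k\<in>S. \<bar>pinv x k\<bar>) * H T"
        by (rule L0(2)[OF inv(2)]) (use hbound[OF T F s1] in \<open>auto simp: P_def\<close>)
      thus ?thesis using e3 pabs[of x] by (simp add: c_def)
    qed
    have main: "(\<Sum>j\<in>F. \<bar>pinv x j - pinv y j\<bar>) \<le> C / lam1 + H T" if T: "T > 0" for T
    proof -
      have "(\<Sum>j\<in>F. \<bar>pinv x j - pinv y j\<bar>) = (\<Sum>j\<in>F. s j * (pinv x j - pinv y j))"
        by (rule sum.cong) (auto simp: s_def sgn_real_def)
      also have "\<dots> = (g 0 - g T) + (g T - (\<Sum>j\<in>F. s j * pinv y j))"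
        using g0 by (simp add: algebra_simps sum_subtractf)
      also have "g 0 - g T \<le> C / lam1"
      proof -
        have "h 0 \<le> h T" by (rule hmono[OF T])
        hence "g 0 - g T \<le> C / lam1 - C / lam1 * exp (- lam1 * T)" by (simp add: h_def)
        moreover have "0 \<le> C / lam1 * exp (- lam1 * T)" using C0 A4_pos by simp
        ultimately show ?thesis by linarith
      qed
      finally show ?thesis using gT[OF T] by linarith
    qed
    fix \<epsilon> :: real assume \<epsilon>: "0 < \<epsilon>"
    define T where "T = max 1 (ln (c1 / \<epsilon>) / lam1)"
    have T0: "T > 0" by (simp add: T_def)
    have "lam1 * T \<ge> ln (c1 / \<epsilon>)"
      using A4_pos by (simp add: T_def field_simps max_def)
    hence "exp (- lam1 * T) \<le> exp (- ln (c1 / \<epsilon>))" by simp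
    also have "\<dots> = \<epsilon> / c1" using A4_pos \<epsilon> by (simp add: exp_minus)
    finally have "H T \<le> \<epsilon>" using A4_pos by (simp add: H_def field_simps)
    thus "(\<Sum>j\<in>F. \<bar>pinv x j - pinv y j\<bar>) \<le> C / lam1 + \<epsilon>" using main[OF T0] by linarith
  qed
  have "var_dist S (pinv x) (pinv y) \<le> C / lam1"
    unfolding var_dist_def
    by (rule infsum_le_finite_sums[OF abs_summ_real[OF summable_on_diff'[OF inv(2) inv(2)]] finite_bound])
  also have "C / lam1 \<le> 4 * c1 * K3 / lam1 * norm (x - y)"
  proof -
    have "C / lam1 = 2 * (c1 * K3 / lam1 * norm (x - y))" by (simp add: C_def L_def field_simps)
    also have "\<dots> \<le> 4 * (c1 * K3 / lam1 * norm (x - y))"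
      using A3_pos A4_pos by (intro mult_right_mono) auto
    finally show ?thesis by simp
  qed
  finally show "var_dist S (pinv x) (pinv y) \<le> 4 * c1 * K3 / lam1 * norm (x - y)" .
qed

end
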